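(* Let $\mathcal K$ be a complex Hilbert space and $\mu$ a $\mathcal K$-Carleson measure. If there exists a countable set $N\subseteq\mathbb R_+$ with $\sum_{\lambda\in N}\frac{\lambda}{(\lambda+1)^2}<\infty$ such that the operator $\mu(\mathbb R_+\setminus N)$ is not strictly positive, then $H_\mu$ is not strictly positive.
   Context: $\mathbb R_+=(0,\infty)$. $H^2(\mathbb C_+,\mathcal K)$ is the Hardy space of holomorphic $f:\mathbb C_+\to\mathcal K$ with $\sup_{y>0}\int\|f(x+iy)\|^2dx<\infty$. A $\mathcal K$-Carleson measure is a measure $\mu$ on $\mathbb R_+$ with values in the positive bounded operators on $\mathcal K$ such that $(f,g)\mapsto\int_{\mathbb R_+}\langle f(i\lambda),d\mu(\lambda)g(i\lambda)\rangle$ is a continuous sesquilinear form on $H^2(\mathbb C_+,\mathcal K)$; $H_\mu$ is the bounded operator representing it. An operator $A$ is strictly positive if $\langle v,Av\rangle>0$ for all $v\ne0$. *)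

theory Defs
  imports "HOL-Analysis.Analysis"
begin

text \<open>HOL-Analysis only has real inner product spaces.  A complex inner product
space is modelled as a real inner product space with a complex scalar
multiplication extending the real one, such that multiplication by i is
orthogonal; the real inner product is then the real part of the complex one.
A complex Hilbert space is such a space which is moreover complete.\<close>

class complex_inner = real_inner +
  fixes cscale :: "complex \<Rightarrow> 'a \<Rightarrow> 'a"
  assumes cscale_add_right: "cscale a (x + y) = cscale a x + cscale a y"
    and cscale_add_left: "cscale (a + b) x = cscale a x + cscale b x"
    and cscale_cscale: "cscale a (cscale b x) = cscale (a * b) x"
    and cscale_of_real: "cscale (complex_of_real r) x = r *\<^sub>R x"
    and inner_cscale_ii: "inner (cscale \<i> x) (cscale \<i> y) = inner x y"

instantiation complex :: complex_inner
begin
definition cscale_complex :: "complex \<Rightarrow> complex \<Rightarrow> complex" where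
  "cscale_complex a x = a * x"
instance
  by standard (auto simp: cscale_complex_def algebra_simps inner_complex_def scaleR_conv_of_real)
end

text \<open>Complex inner product, antilinear in the first and linear in the second argument.\<close>
definition cinner :: "'a::complex_inner \<Rightarrow> 'a \<Rightarrow> complex" where
  "cinner x y = Complex (inner x y) (- inner x (cscale \<i> y))"

definition bounded_clinear_op :: "('a::complex_inner \<Rightarrow> 'a) \<Rightarrow> bool" where
  "bounded_clinear_op T \<longleftrightarrow>
     (\<forall>x y. T (x + y) = T x + T y) \<and> (\<forall>c x. T (cscale c x) = cscale c (T x)) \<and>
     (\<exists>K. \<forall>x. norm (T x) \<le> K * norm x)"

definition positive_op :: "('a::complex_inner \<Rightarrow> 'a) \<Rightarrow> bool" where
  "positive_op T \<longleftrightarrow> (\<forall>v. cinner v (T v) \<in> \<real> \<and> Re (cinner v (T v)) \<ge> 0)"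

definition strictly_positive_op :: "('a::complex_inner \<Rightarrow> 'a) \<Rightarrow> bool" where
  "strictly_positive_op T \<longleftrightarrow>
     (\<forall>v. v \<noteq> 0 \<longrightarrow> cinner v (T v) \<in> \<real> \<and> Re (cinner v (T v)) > 0)"

definition pos_op_measure :: "(real set \<Rightarrow> 'a::complex_inner \<Rightarrow> 'a) \<Rightarrow> bool" where
  "pos_op_measure \<mu> \<longleftrightarrow>
     (\<forall>A \<in> sets borel. A \<subseteq> {0<..} \<longrightarrow> bounded_clinear_op (\<mu> A) \<and> positive_op (\<mu> A)) \<and>
     (\<forall>v. \<mu> {} v = 0) \<and>
     (\<forall>A :: nat \<Rightarrow> real set. (\<forall>n. A n \<in> sets borel \<and> A n \<subseteq> {0<..}) \<longrightarrow> disjoint_family A \<longrightarrow>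
        (\<forall>u v. (\<lambda>n. cinner u (\<mu> (A n) v)) sums cinner u (\<mu> (\<Union>n. A n) v)))"

definition rs_sum ::
  "(real set \<Rightarrow> 'a::complex_inner \<Rightarrow> 'a) \<Rightarrow> (real \<Rightarrow> 'a) \<Rightarrow> (real \<Rightarrow> 'a) \<Rightarrow>
   (nat \<Rightarrow> real) \<Rightarrow> (nat \<Rightarrow> real) \<Rightarrow> nat \<Rightarrow> complex" where
  "rs_sum \<mu> f g s t n = (\<Sum>k<n. cinner (f (t k)) (\<mu> {s k<..s (Suc k)} (g (t k))))"

text \<open>\<open>I = \<integral>_{(a,b]} \<langle>f, d\<mu> g\<rangle>\<close> as limit of Riemann--Stieltjes sums as the mesh tends to 0
(used for continuous \<open>f, g\<close>, where it agrees with the measure-theoretic integral).\<close>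
definition has_op_int_on ::
  "(real set \<Rightarrow> 'a::complex_inner \<Rightarrow> 'a) \<Rightarrow> (real \<Rightarrow> 'a) \<Rightarrow> (real \<Rightarrow> 'a) \<Rightarrow>
   real \<Rightarrow> real \<Rightarrow> complex \<Rightarrow> bool" where
  "has_op_int_on \<mu> f g a b I \<longleftrightarrow>
     (\<forall>\<epsilon>>0. \<exists>\<delta>>0. \<forall>n s t. s 0 = a \<and> s n = b \<and>
        (\<forall>k<n. s k < s (Suc k) \<and> s (Suc k) - s k < \<delta> \<and> t k \<in> {s k..s (Suc k)}) \<longrightarrow>
        cmod (rs_sum \<mu> f g s t n - I) < \<epsilon>)"

definition op_int_on ::
  "(real set \<Rightarrow> 'a::complex_inner \<Rightarrow> 'a) \<Rightarrow> (real \<Rightarrow> 'a) \<Rightarrow> (real \<Rightarrow> 'a) \<Rightarrow> real \<Rightarrow> real \<Rightarrow> complex" where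
  "op_int_on \<mu> f g a b = (THE I. has_op_int_on \<mu> f g a b I)"

definition has_op_int ::
  "(real set \<Rightarrow> 'a::complex_inner \<Rightarrow> 'a) \<Rightarrow> (real \<Rightarrow> 'a) \<Rightarrow> (real \<Rightarrow> 'a) \<Rightarrow> complex \<Rightarrow> bool" where
  "has_op_int \<mu> f g L \<longleftrightarrow>
     (\<forall>a b. 0 < a \<and> a < b \<longrightarrow> (\<exists>I. has_op_int_on \<mu> f g a b I)) \<and>
     ((\<lambda>(a, b). op_int_on \<mu> f g a b) \<longlongrightarrow> L) (at_right 0 \<times>\<^sub>F at_top)"

definition op_int ::
  "(real set \<Rightarrow> 'a::complex_inner \<Rightarrow> 'a) \<Rightarrow> (real \<Rightarrow> 'a) \<Rightarrow> (real \<Rightarrow> 'a) \<Rightarrow> complex" where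
  "op_int \<mu> f g = (THE L. has_op_int \<mu> f g L)"

definition hardy2 :: "(complex \<Rightarrow> 'a::complex_inner) set" where
  "hardy2 = {f. (\<forall>z. Im z > 0 \<longrightarrow> (\<exists>f'. (f has_derivative (\<lambda>h. cscale h f')) (at z))) \<and>
               (SUP y\<in>{0<..}. \<integral>\<^sup>+ x. ennreal ((norm (f (Complex x y)))\<^sup>2) \<partial>lborel) < \<infinity>}"

definition h2_norm :: "(complex \<Rightarrow> 'a::complex_inner) \<Rightarrow> real" where
  "h2_norm f = sqrt (enn2real (SUP y\<in>{0<..}. \<integral>\<^sup>+ x. ennreal ((norm (f (Complex x y)))\<^sup>2) \<partial>lborel))"

definition on_iaxis :: "(complex \<Rightarrow> 'a) \<Rightarrow> real \<Rightarrow> 'a" where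
  "on_iaxis f = (\<lambda>l. f (Complex 0 l))"

definition carleson_form :: "(real set \<Rightarrow> 'a::complex_inner \<Rightarrow> 'a) \<Rightarrow> (complex \<Rightarrow> 'a) \<Rightarrow> (complex \<Rightarrow> 'a) \<Rightarrow> complex" where
  "carleson_form \<mu> f g = op_int \<mu> (on_iaxis f) (on_iaxis g)"

definition K_carleson :: "(real set \<Rightarrow> 'a::complex_inner \<Rightarrow> 'a) \<Rightarrow> bool" where
  "K_carleson \<mu> \<longleftrightarrow> pos_op_measure \<mu> \<and>
     (\<forall>f\<in>hardy2. \<forall>g\<in>hardy2. \<exists>L. has_op_int \<mu> (on_iaxis f) (on_iaxis g) L) \<and>
     (\<exists>C. \<forall>f\<in>hardy2. \<forall>g\<in>hardy2. cmod (carleson_form \<mu> f g) \<le> C * h2_norm f * h2_norm g)"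

text \<open>\<open>H\<^sub>\<mu>\<close> is the bounded operator on \<open>H\<^sup>2\<close> with \<open>\<langle>f, H\<^sub>\<mu> g\<rangle>\<^sub>H\<^sub>2 = carleson_form \<mu> f g\<close>; hence
\<open>H\<^sub>\<mu>\<close> is strictly positive iff \<open>carleson_form \<mu> f f > 0\<close> for every nonzero \<open>f \<in> H\<^sup>2\<close>
(an element of \<open>H\<^sup>2\<close> is zero iff it vanishes on the upper half plane).\<close>
definition H_mu_strictly_positive :: "(real set \<Rightarrow> 'a::complex_inner \<Rightarrow> 'a) \<Rightarrow> bool" where
  "H_mu_strictly_positive \<mu> \<longleftrightarrow>
     (\<forall>f\<in>hardy2. (\<exists>z. Im z > 0 \<and> f z \<noteq> 0) \<longrightarrow>
        carleson_form \<mu> f f \<in> \<real> \<and> Re (carleson_form \<mu> f f) > 0)"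

end

theory Submission
  imports Defs "HOL-Complex_Analysis.Complex_Analysis" "HOL-Probability.Sinc_Integral"
begin


definition bf :: "real \<Rightarrow> complex \<Rightarrow> complex" where
  "bf l z = (if l \<le> 1 then (z - \<i> * of_real l) / (z + \<i> * of_real l)
            else (\<i> * of_real l - z) / (z + \<i> * of_real l))"

lemma bf_den: assumes "Im z > 0" "l > 0" shows "z + \<i> * of_real l \<noteq> 0"
proof
  assume "z + \<i> * of_real l = 0"
  then have "Im (z + \<i> * of_real l) = 0" by simp
  then show False using assms by simp
qed

lemma bf_den_ge: assumes "Im z > 0" "l > 0" shows "Im z + l \<le> norm (z + \<i> * of_real l)"
proof -
  have "Im (z + \<i> * of_real l) = Im z + l" by simp
  moreover have "\<bar>Im (z + \<i> * of_real l)\<bar> \<le> norm (z + \<i> * of_real l)" by (rule abs_Im_le_cmod)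
  ultimately show ?thesis using assms by simp
qed

lemma bf_norm_le: assumes "Im z > 0" "l > 0" shows "norm (bf l z) \<le> 1"
proof -
  have d: "z + \<i> * of_real l \<noteq> 0" using bf_den assms by auto
  have "norm (z - \<i> * of_real l) \<le> norm (z + \<i> * of_real l)"
  proof -
    have "(norm (z - \<i> * of_real l))^2 = (Re z)^2 + (Im z - l)^2"
      by (simp add: cmod_power2)
    also have "\<dots> \<le> (Re z)^2 + (Im z + l)^2" using assms by (simp add: power2_eq_square algebra_simps)
    also have "\<dots> = (norm (z + \<i> * of_real l))^2" by (simp add: cmod_power2)
    finally show ?thesis by (simp add: power2_le_iff_abs_le)
  qed
  moreover have "norm (\<i> * of_real l - z) = norm (z - \<i> * of_real l)" by (rule norm_minus_commute)
  ultimately show ?thesis using d by (auto simp: bf_def norm_divide divide_le_eq_1)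
qed

lemma bf_zero: assumes "l > 0" shows "bf l (Complex 0 l) = 0"
proof -
  have "Complex 0 l = \<i> * of_real l" by (simp add: complex_eq_iff)
  thus ?thesis by (simp add: bf_def)
qed

lemma bf_nonzero: assumes "Re z \<noteq> 0" shows "bf l z \<noteq> 0"
proof -
  have "z - \<i> * of_real l \<noteq> 0" "z + \<i> * of_real l \<noteq> 0" "\<i> * of_real l - z \<noteq> 0"
    using assms by (auto simp: complex_eq_iff)
  thus ?thesis by (simp add: bf_def)
qed

lemma bf_minus1: assumes "Im z > 0" "l > 0"
  shows "norm (bf l z - 1) \<le> 8 * (1 / Im z + norm z) * (l / (l + 1)^2)"
proof -
  define w where "w = z + \<i> * of_real l"
  have d: "w \<noteq> 0" using bf_den assms w_def by auto
  have wge: "Im z + l \<le> norm w" using bf_den_ge assms w_def by auto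
  have y: "Im z > 0" by fact
  have wp: "norm w > 0" using d by simp
  show ?thesis
  proof (cases "l \<le> 1")
    case True
    have "bf l z - 1 = - 2 * \<i> * of_real l / w" using True d
      by (simp add: bf_def w_def field_simps)
    then have "norm (bf l z - 1) = 2 * l / norm w" using assms by (simp add: norm_divide norm_mult)
    also have "\<dots> \<le> 2 * l / Im z" using wge assms wp by (intro divide_left_mono) auto
    also have "\<dots> \<le> 8 * (1 / Im z) * (l / (l + 1)^2)"
    proof -
      have "(l+1)^2 \<le> 4" using power_mono[of "l+1" 2 2] True assms by simp
      hence "2 * l * (l+1)^2 \<le> 8 * l" using assms by simp
      thus ?thesis using y assms by (simp add: field_simps)
    qed
    also have "\<dots> \<le> 8 * (1 / Im z + norm z) * (l / (l + 1)^2)"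
      using assms by (intro mult_right_mono mult_left_mono) auto
    finally show ?thesis .
  next
    case False
    have "bf l z - 1 = - 2 * z / w" using False d
      by (simp add: bf_def w_def field_simps)
    then have "norm (bf l z - 1) = 2 * norm z / norm w" by (simp add: norm_divide norm_mult)
    also have "\<dots> \<le> 2 * norm z / l" using wge assms wp by (intro divide_left_mono) auto
    also have "\<dots> \<le> 8 * norm z * (l / (l + 1)^2)"
    proof -
      have "l \<le> l * l" using False mult_right_mono[of 1 l l] by simp
      moreover have "1 \<le> l * l" using False mult_mono[of 1 l 1 l] by simp
      ultimately have "(l+1)^2 \<le> 4 * l^2" by (simp add: power2_eq_square algebra_simps)
      hence "2 * (l+1)^2 \<le> 8 * l * l" by (simp add: power2_eq_square)
      hence "norm z * (2 * (l+1)^2) \<le> norm z * (8 * l * l)"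
        by (intro mult_left_mono) auto
      hence "2 * norm z * (l+1)^2 \<le> 8 * norm z * l * l" by (simp add: algebra_simps)
      thus ?thesis using assms by (simp add: field_simps)
    qed
    also have "\<dots> \<le> 8 * (1 / Im z + norm z) * (l / (l + 1)^2)"
      using assms by (intro mult_right_mono mult_left_mono) auto
    finally show ?thesis .
  qed
qed

lemma bf_holo: assumes "l > 0" shows "bf l holomorphic_on {z. Im z > 0}"
  unfolding bf_def using bf_den[OF _ assms]
  by (cases "l \<le> 1") (auto intro!: holomorphic_intros)

lemma blaschke:
  assumes "countable N" "N \<subseteq> {0<..}" "(\<lambda>l. l / (l + 1)\<^sup>2) summable_on N"
  shows "\<exists>B. B holomorphic_on {z. Im z > 0} \<and> (\<forall>z. Im z > 0 \<longrightarrow> norm (B z) \<le> 1) \<and>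
             (\<forall>l\<in>N. B (Complex 0 l) = 0) \<and> B (Complex 1 1) \<noteq> 0"
proof -
  obtain g :: "real \<Rightarrow> nat" where inj: "inj_on g N" using assms(1) countable_def by blast
  define E where "E = g ` N"
  define e where "e = inv_into N g"
  have bij: "bij_betw e E N" unfolding e_def E_def
    by (rule bij_betw_inv_into[OF inj_on_imp_bij_betw[OF inj]])
  have eN: "e n \<in> N" if "n \<in> E" for n using bij that by (auto simp: bij_betw_def)
  have epos: "e n > 0" if "n \<in> E" for n using eN[OF that] assms(2) by auto
  define w where "w = (\<lambda>l::real. l / (l + 1)\<^sup>2)"
  define W where "W n = (if n \<in> E then w (e n) else 0)" for n
  have Wnn: "W n \<ge> 0" for n using epos[of n] by (auto simp: W_def w_def less_imp_le)
  have "(\<lambda>n. w (e n)) summable_on E"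
    using summable_on_reindex_bij_betw[OF bij, of w] assms(3) by (simp add: w_def)
  moreover have "W summable_on UNIV \<longleftrightarrow> (\<lambda>n. w (e n)) summable_on E"
    by (rule summable_on_cong_neutral) (auto simp: W_def)
  ultimately have "W summable_on UNIV" by simp
  hence sW: "summable W" using summable_on_UNIV_nonneg_real_iff Wnn by blast
  define F where "F n z = (if n \<in> E then bf (e n) z else 1)" for n z
  define P where "P M z = (\<Prod>n<M. F n z)" for M z
  define B where "B z = lim (\<lambda>M. P M z)" for z
  define H where "H = {z. Im z > 0}"
  have openH: "open H" unfolding H_def by (rule open_halfspace_Im_gt)
  have Fholo: "F n holomorphic_on H" for n
  proof -
    have "F n = (if n \<in> E then bf (e n) else (\<lambda>_. 1))" by (auto simp: F_def fun_eq_iff)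
    thus ?thesis using bf_holo epos by (cases "n \<in> E") (auto simp: H_def)
  qed
  have Pholo: "P M holomorphic_on H" for M
    unfolding P_def using Fholo by (intro holomorphic_on_prod) auto
  have Fbound: "norm (F n z - 1) \<le> 8 * (1 / Im z + norm z) * W n" if "Im z > 0" for n z
    using bf_minus1[OF that epos, of n] that by (auto simp: F_def W_def w_def)
  have Fle1: "norm (F n z) \<le> 1" if "Im z > 0" for n z
    using bf_norm_le[OF that epos, of n] by (auto simp: F_def)
  have ulim: "uniform_limit (cball z0 (Im z0 / 2)) P B sequentially" if z0: "Im z0 > 0" for z0
  proof -
    define r where "r = Im z0 / 2"
    define K where "K = cball z0 r"
    have Kin: "Im z \<ge> r" if "z \<in> K" for z
    proof -
      have "\<bar>Im (z0 - z)\<bar> \<le> norm (z0 - z)" by (rule abs_Im_le_cmod)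
      moreover have "norm (z0 - z) \<le> r" using that by (simp add: K_def dist_norm)
      ultimately show ?thesis by (simp add: r_def)
    qed
    have rpos: "r > 0" using z0 by (simp add: r_def)
    have KH: "K \<subseteq> H" using Kin rpos by (force simp: H_def)
    define C where "C = 8 * (1 / r + (norm z0 + r))"
    have Kb: "norm (F n z - 1) \<le> C * W n" if "z \<in> K" for n z
    proof -
      have iz: "Im z > 0" using Kin[OF that] rpos by simp
      have "norm z \<le> norm z0 + r"
        using that norm_triangle_ineq2[of z z0] by (simp add: K_def dist_norm norm_minus_commute)
      moreover have "1 / Im z \<le> 1 / r" using Kin[OF that] rpos by (simp add: frac_le)
      ultimately have "8 * (1 / Im z + norm z) \<le> C" by (simp add: C_def)
      hence "8 * (1 / Im z + norm z) * W n \<le> C * W n" using Wnn by (intro mult_right_mono) auto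
      thus ?thesis using Fbound[OF iz, of n] by simp
    qed
    have "uniformly_convergent_on K (\<lambda>M z. \<Sum>n<M. norm (F n z - 1))"
      by (rule Weierstrass_m_test'[of _ _ "\<lambda>n. C * W n"]) (use Kb sW in \<open>auto intro: summable_mult\<close>)
    hence "uniformly_convergent_on K P"
      unfolding P_def
      by (intro uniformly_convergent_on_prod')
         (auto simp: K_def intro: holomorphic_on_imp_continuous_on holomorphic_on_subset[OF Fholo KH[unfolded K_def]])
    then obtain h where h: "uniform_limit K P h sequentially" by (auto simp: uniformly_convergent_on_def)
    have "h z = B z" if "z \<in> K" for z
    proof -
      have "(\<lambda>M. P M z) \<longlonglongrightarrow> h z" using tendsto_uniform_limitI[OF h that] .
      thus ?thesis unfolding B_def by (simp add: limI)
    qed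
    hence "uniform_limit K P B sequentially" using h uniform_limit_cong' by metis
    thus ?thesis by (simp add: K_def r_def)
  qed
  have plim: "(\<lambda>M. P M z) \<longlonglongrightarrow> B z" if "Im z > 0" for z
    using tendsto_uniform_limitI[OF ulim[OF that], of z] that by simp
  have "B holomorphic_on H"
  proof (rule holomorphic_uniform_sequence[OF openH Pholo])
    fix z assume "z \<in> H"
    hence z: "Im z > 0" by (simp add: H_def)
    have "cball z (Im z / 2) \<subseteq> H"
    proof
      fix x assume "x \<in> cball z (Im z / 2)"
      hence "norm (z - x) \<le> Im z / 2" by (simp add: dist_norm)
      moreover have "\<bar>Im (z - x)\<bar> \<le> norm (z - x)" by (rule abs_Im_le_cmod)
      ultimately show "x \<in> H" using z by (simp add: H_def)
    qed
    thus "\<exists>d>0. cball z d \<subseteq> H \<and> uniform_limit (cball z d) P B sequentially"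
      using ulim[OF z] z by (intro exI[of _ "Im z / 2"]) auto
  qed
  moreover have "norm (B z) \<le> 1" if "Im z > 0" for z
  proof (rule Lim_norm_ubound[OF _ plim[OF that]])
    show "\<forall>\<^sub>F M in sequentially. norm (P M z) \<le> 1"
    proof (intro always_eventually allI)
      fix M
      have "norm (P M z) = (\<Prod>n<M. norm (F n z))" by (simp add: P_def prod_norm)
      also have "\<dots> \<le> 1" by (intro prod_le_1) (use Fle1[OF that] in auto)
      finally show "norm (P M z) \<le> 1" .
    qed
  qed simp
  moreover have "B (Complex 0 l) = 0" if l: "l \<in> N" for l
  proof -
    have lp: "l > 0" using l assms(2) by auto
    define n0 where "n0 = g l"
    have n0E: "n0 \<in> E" using l by (simp add: n0_def E_def)
    have en0: "e n0 = l" using l inj by (simp add: n0_def e_def)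
    have F0: "F n0 (Complex 0 l) = 0" using n0E en0 bf_zero[OF lp] by (simp add: F_def)
    have "\<forall>\<^sub>F M in sequentially. P M (Complex 0 l) = 0"
      unfolding eventually_sequentially
      by (rule exI[of _ "Suc n0"]) (auto simp: P_def F0 intro!: prod_zero bexI[of _ n0])
    hence "(\<lambda>M. P M (Complex 0 l)) \<longlonglongrightarrow> 0" by (rule tendsto_eventually)
    moreover have "(\<lambda>M. P M (Complex 0 l)) \<longlonglongrightarrow> B (Complex 0 l)" using plim lp by simp
    ultimately show ?thesis using LIMSEQ_unique by blast
  qed
  moreover have "B (Complex 1 1) \<noteq> 0"
  proof -
    define z1 where "z1 = Complex 1 1"
    have iz1: "Im z1 > 0" by (simp add: z1_def)
    have "summable (\<lambda>n. norm (F n z1 - 1))"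
      by (rule summable_comparison_test[of _ "\<lambda>n. 8 * (1 / Im z1 + norm z1) * W n"])
         (use Fbound[OF iz1] sW in \<open>auto intro: summable_mult\<close>)
    hence ac: "abs_convergent_prod (\<lambda>n. F n z1)" by (rule summable_imp_abs_convergent_prod)
    hence cp: "convergent_prod (\<lambda>n. F n z1)" by (rule abs_convergent_prod_imp_convergent_prod)
    have nz: "F n z1 \<noteq> 0" for n using bf_nonzero[of z1] by (simp add: F_def z1_def)
    have pnz: "prodinf (\<lambda>n. F n z1) \<noteq> 0" by (rule prodinf_nonzero[OF cp nz])
    have "(\<lambda>M. \<Prod>i\<le>M. F i z1) \<longlonglongrightarrow> prodinf (\<lambda>n. F n z1)" by (rule convergent_prod_LIMSEQ[OF cp])
    hence "(\<lambda>M. P (Suc M) z1) \<longlonglongrightarrow> prodinf (\<lambda>n. F n z1)" by (simp add: P_def lessThan_Suc_atMost)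
    moreover have "(\<lambda>M. P (Suc M) z1) \<longlonglongrightarrow> B z1" using plim[OF iz1] by (rule LIMSEQ_Suc)
    ultimately have "B z1 = prodinf (\<lambda>n. F n z1)" using LIMSEQ_unique by blast
    thus ?thesis using pnz by (simp add: z1_def)
  qed
  ultimately show ?thesis unfolding H_def by blast
qed



lemma cscale_zero_left [simp]: "cscale 0 x = 0"
  using cscale_of_real[of 0 x] by simp

lemma cscale_decomp: "cscale c x = Re c *\<^sub>R x + Im c *\<^sub>R cscale \<i> x"
proof -
  have c: "c = complex_of_real (Re c) + complex_of_real (Im c) * \<i>" by (simp add: complex_eq_iff)
  have "cscale c x = cscale (complex_of_real (Re c)) x + cscale (complex_of_real (Im c) * \<i>) x"
    by (subst c) (rule cscale_add_left)
  also have "cscale (complex_of_real (Im c) * \<i>) x = Im c *\<^sub>R cscale \<i> x"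
    by (simp add: cscale_cscale[symmetric] cscale_of_real)
  finally show ?thesis by (simp add: cscale_of_real)
qed

lemma cscale_ii_ii: "cscale \<i> (cscale \<i> x) = - x"
proof -
  have "cscale \<i> (cscale \<i> x) = cscale (-1) x" by (simp add: cscale_cscale)
  thus ?thesis using cscale_of_real[of "-1" x] by simp
qed

lemma inner_ii_left: "inner (cscale \<i> x) y = - inner x (cscale \<i> y)"
proof -
  have "inner (cscale \<i> x) y = inner (cscale \<i> (cscale \<i> x)) (cscale \<i> y)" by (simp add: inner_cscale_ii)
  thus ?thesis by (simp add: cscale_ii_ii)
qed

lemma inner_self_ii: "inner x (cscale \<i> x) = 0"
  using inner_ii_left[of x x] by (simp add: inner_commute)

lemma norm_ii: "norm (cscale \<i> x) = norm x"
  by (simp add: norm_eq_sqrt_inner inner_cscale_ii)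

lemma norm_cscale: "norm (cscale c x) = cmod c * norm x"
proof -
  have "(norm (cscale c x))^2 = inner (cscale c x) (cscale c x)" by (simp add: power2_norm_eq_inner)
  also have "\<dots> = (Re c)^2 * inner x x + (Im c)^2 * inner (cscale \<i> x) (cscale \<i> x)"
    by (simp add: cscale_decomp[of c] inner_add_left inner_add_right inner_self_ii inner_commute[of "cscale \<i> x" x] power2_eq_square algebra_simps)
  also have "\<dots> = (cmod c * norm x)^2"
    by (simp add: inner_cscale_ii power2_norm_eq_inner[symmetric] cmod_power2 power_mult_distrib algebra_simps norm_ii)
  finally show ?thesis by (simp add: power2_eq_iff_nonneg)
qed

lemma cscale_scaleR_right: "cscale c (r *\<^sub>R x) = r *\<^sub>R cscale c x"
  by (metis cscale_cscale cscale_of_real mult.commute)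

lemma cscale_zero_right [simp]: "cscale c 0 = 0"
  using cscale_scaleR_right[of c 0 0] by simp

lemma bounded_linear_cscale_left: "bounded_linear (\<lambda>c. cscale c (v::'a::complex_inner))"
proof (rule bounded_linear_intro[of _ "norm v"])
  show "cscale (b + c) v = cscale b v + cscale c v" for b c by (rule cscale_add_left)
  show "cscale (r *\<^sub>R b) v = r *\<^sub>R cscale b v" for r b
    by (simp add: scaleR_conv_of_real cscale_cscale[symmetric] cscale_of_real)
  show "norm (cscale b v) \<le> norm b * norm v" for b by (simp add: norm_cscale)
qed

lemma cinner_cscale_right: "cinner x (cscale a y) = a * cinner x y"
proof -
  have ii: "cscale \<i> (cscale a y) = Re a *\<^sub>R cscale \<i> y - Im a *\<^sub>R y"
    by (simp add: cscale_decomp[of a y] cscale_add_right cscale_scaleR_right cscale_ii_ii)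
  have r1: "inner x (cscale a y) = Re a * inner x y + Im a * inner x (cscale \<i> y)"
    by (simp add: cscale_decomp[of a y] inner_add_right)
  have r2: "inner x (cscale \<i> (cscale a y)) = Re a * inner x (cscale \<i> y) - Im a * inner x y"
    by (simp add: ii inner_diff_right)
  show ?thesis
    by (simp add: cinner_def r1 r2 complex_eq_iff algebra_simps)
qed

lemma cinner_cscale_left: "cinner (cscale a x) y = cnj a * cinner x y"
proof -
  have l1: "inner (cscale a x) z = Re a * inner x z - Im a * inner x (cscale \<i> z)" for z
    by (simp add: cscale_decomp[of a x] inner_add_left inner_ii_left)
  show ?thesis
    by (simp add: cinner_def l1 cscale_ii_ii complex_eq_iff algebra_simps)
qed

lemma cinner_zero_right [simp]: "cinner x 0 = 0"
  by (simp add: cinner_def complex_eq_iff)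



lemma mono_upto:
  fixes s :: "nat \<Rightarrow> real"
  assumes "\<forall>k<n. s k < s (Suc k)" "i \<le> j" "j \<le> n"
  shows "s i \<le> s j"
  using assms(2,3)
proof (induction j)
  case 0 thus ?case by simp
next
  case (Suc j)
  show ?case
  proof (cases "i = Suc j")
    case True thus ?thesis by simp
  next
    case False
    hence "i \<le> j" using Suc.prems by simp
    hence "s i \<le> s j" using Suc.IH Suc.prems by simp
    also have "s j < s (Suc j)" using assms(1) Suc.prems by simp
    finally show ?thesis by simp
  qed
qed

lemma has_op_int_on_unique:
  assumes "has_op_int_on \<mu> f g a b I" "has_op_int_on \<mu> f g a b J" "a < b"
  shows "I = J"
proof (rule ccontr)
  assume ne: "I \<noteq> J"
  define \<epsilon> where "\<epsilon> = cmod (I - J) / 2"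
  have ep: "\<epsilon> > 0" using ne by (simp add: \<epsilon>_def)
  obtain d1 where d1: "d1 > 0" "\<forall>n s t. s 0 = a \<and> s n = b \<and>
        (\<forall>k<n. s k < s (Suc k) \<and> s (Suc k) - s k < d1 \<and> t k \<in> {s k..s (Suc k)}) \<longrightarrow>
        cmod (rs_sum \<mu> f g s t n - I) < \<epsilon>"
    using assms(1) ep unfolding has_op_int_on_def by blast
  obtain d2 where d2: "d2 > 0" "\<forall>n s t. s 0 = a \<and> s n = b \<and>
        (\<forall>k<n. s k < s (Suc k) \<and> s (Suc k) - s k < d2 \<and> t k \<in> {s k..s (Suc k)}) \<longrightarrow>
        cmod (rs_sum \<mu> f g s t n - J) < \<epsilon>"
    using assms(2) ep unfolding has_op_int_on_def by blast
  define d where "d = min d1 d2"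
  have dp: "d > 0" using d1 d2 by (simp add: d_def)
  obtain n :: nat where n: "(b - a) / d < real n" using reals_Archimedean2 by blast
  have npos: "n > 0" using n dp assms(3) by (cases n) (auto simp: field_simps)
  have hl: "(b - a) / real n < d" using n npos dp assms(3) by (simp add: field_simps)
  define h where "h = (b - a) / real n"
  define s where "s k = a + real k * h" for k
  have hp: "h > 0" using npos assms(3) by (simp add: h_def)
  have sS: "s (Suc k) = s k + h" for k by (simp add: s_def algebra_simps)
  have sn: "s n = b" using npos by (simp add: s_def h_def)
  have P: "s 0 = a \<and> s n = b \<and>
        (\<forall>k<n. s k < s (Suc k) \<and> s (Suc k) - s k < d \<and> s k \<in> {s k..s (Suc k)})"
    using hp hl sn by (auto simp: sS h_def[symmetric]) (simp add: s_def)
  have "cmod (rs_sum \<mu> f g s s n - I) < \<epsilon>" using d1(2) P by (auto simp: d_def)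
  moreover have "cmod (rs_sum \<mu> f g s s n - J) < \<epsilon>" using d2(2) P by (auto simp: d_def)
  ultimately have "cmod (I - J) < 2 * \<epsilon>"
    using norm_triangle_ineq4[of "rs_sum \<mu> f g s s n - J" "rs_sum \<mu> f g s s n - I"] by (simp add: norm_minus_commute)
  thus False by (simp add: \<epsilon>_def)
qed

lemma int_zero:
  fixes \<mu> :: "real set \<Rightarrow> 'k::complex_inner \<Rightarrow> 'k" and v :: 'k and \<phi> :: "real \<Rightarrow> complex"
  assumes pos: "pos_op_measure \<mu>" and N: "countable N" "N \<subseteq> {0<..}"
    and v0: "Re (cinner v (\<mu> ({0<..} - N) v)) \<le> 0"
    and phic: "continuous_on {0<..} \<phi>" and phiz: "\<forall>l\<in>N. \<phi> l = 0"
    and ab: "0 < a" "a < b"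
  shows "has_op_int_on \<mu> (\<lambda>t. cscale (\<phi> t) v) (\<lambda>t. cscale (\<phi> t) v) a b 0"
proof -
  define c where "c A = cinner v (\<mu> A v)" for A
  define BS where "BS = {A. A \<in> sets borel \<and> A \<subseteq> {(0::real)<..}}"
  have c1: "c A \<in> \<real> \<and> Re (c A) \<ge> 0" if "A \<in> BS" for A
    using pos that unfolding pos_op_measure_def positive_op_def c_def BS_def by blast
  have c0: "c {} = 0" using pos by (simp add: pos_op_measure_def c_def)
  have c2: "c (A \<union> B) = c A + c B" if "A \<in> BS" "B \<in> BS" "A \<inter> B = {}" for A B
  proof -
    define S where "S n = (if n = 0 then A else if n = 1 then B else {})" for n :: nat
    have "\<forall>n. S n \<in> sets borel \<and> S n \<subseteq> {0<..}" using that by (auto simp: S_def BS_def)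
    moreover have "disjoint_family S" using that(3) by (auto simp: disjoint_family_on_def S_def)
    ultimately have "(\<lambda>n. c (S n)) sums c (\<Union>n. S n)"
      using pos unfolding pos_op_measure_def c_def by blast
    moreover have "(\<Union>n. S n) = A \<union> B" by (auto simp: S_def split: if_splits)
    moreover have "(\<lambda>n. c (S n)) sums (\<Sum>n\<in>{0,1}. c (S n))"
      by (rule sums_finite) (auto simp: S_def c0)
    ultimately show ?thesis using sums_unique2 by (fastforce simp: S_def)
  qed
  have c3: "Re (c A) \<le> Re (c B)" if "A \<in> BS" "B \<in> BS" "A \<subseteq> B" for A B
  proof -
    have "B - A \<in> BS" using that by (auto simp: BS_def)
    hence "c B = c A + c (B - A)" using c2[of A "B - A"] that
      by (metis Diff_disjoint Un_Diff_cancel sup.absorb2)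
    thus ?thesis using c1[OF \<open>B - A \<in> BS\<close>] by simp
  qed
  have Nb: "N \<in> sets borel"
    using null_setsD2[OF countable_imp_null_set_lborel[OF N(1)]] by simp
  have DBS: "{0<..} - N \<in> BS" using Nb by (auto simp: BS_def)
  have c5: "c A = 0" if "A \<in> BS" "A \<inter> N = {}" for A
  proof -
    have "Re (c A) \<le> Re (c ({0<..} - N))" using c3[OF that(1) DBS] that by (auto simp: BS_def)
    hence "Re (c A) = 0" using c1[OF that(1)] v0 by (simp add: c_def)
    moreover have "c A \<in> \<real>" using c1[OF that(1)] by simp
    ultimately show ?thesis by (metis Reals_cases Re_complex_of_real of_real_0)
  qed
  have IBS: "{x<..y} \<in> BS" if "x \<ge> 0" for x y using that by (auto simp: BS_def)
  have c6: "c {s 0<..s n} = (\<Sum>k<n. c {s k<..s (Suc k)})"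
    if "\<forall>k<n. s k < s (Suc k)" "s 0 > 0" for s :: "nat \<Rightarrow> real" and n
    using that
  proof (induction n)
    case 0 thus ?case by (simp add: c0)
  next
    case (Suc n)
    have le: "s 0 \<le> s n" using mono_upto[of n s 0 n] Suc.prems by simp
    have lt: "s n < s (Suc n)" using Suc.prems by simp
    have "{s 0<..s (Suc n)} = {s 0<..s n} \<union> {s n<..s (Suc n)}" using le lt by auto
    hence "c {s 0<..s (Suc n)} = c {s 0<..s n} + c {s n<..s (Suc n)}"
      using c2[OF IBS IBS] le Suc.prems by auto
    thus ?case using Suc by simp
  qed
  define gg where "gg t = (cmod (\<phi> t))^2" for t
  have term_eq: "cinner (cscale (\<phi> t) v) (\<mu> A (cscale (\<phi> t) v)) = of_real (gg t) * c A"
    if "A \<in> BS" for A t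
  proof -
    have lin: "\<mu> A (cscale (\<phi> t) v) = cscale (\<phi> t) (\<mu> A v)"
      using pos that unfolding pos_op_measure_def bounded_clinear_op_def BS_def by blast
    have "cnj (\<phi> t) * \<phi> t = of_real (gg t)"
      by (simp only: gg_def complex_norm_square) (simp add: mult.commute)
    thus ?thesis by (simp add: lin cinner_cscale_left cinner_cscale_right c_def mult.commute)
  qed
  define M where "M = Re (c {a<..b})"
  have M0: "M \<ge> 0" using c1[OF IBS[of a b]] ab by (simp add: M_def)
  have ggc: "continuous_on {a..b} gg"
    unfolding gg_def
    by (intro continuous_intros continuous_on_subset[OF phic]) (use ab in auto)
  have uc: "uniformly_continuous_on {a..b} gg"
    by (rule compact_uniformly_continuous[OF ggc compact_Icc])
  show ?thesis unfolding has_op_int_on_def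
  proof (intro allI impI)
    fix \<epsilon> :: real assume ep: "\<epsilon> > 0"
    define e' where "e' = \<epsilon> / (M + 1)"
    have e'p: "e' > 0" using ep M0 by (simp add: e'_def)
    obtain d where d: "d > 0" "\<forall>x\<in>{a..b}. \<forall>x'\<in>{a..b}. dist x' x < d \<longrightarrow> dist (gg x') (gg x) < e'"
      using uc e'p unfolding uniformly_continuous_on_def by blast
    show "\<exists>\<delta>>0. \<forall>n s t. s 0 = a \<and> s n = b \<and>
        (\<forall>k<n. s k < s (Suc k) \<and> s (Suc k) - s k < \<delta> \<and> t k \<in> {s k..s (Suc k)}) \<longrightarrow>
        cmod (rs_sum \<mu> (\<lambda>t. cscale (\<phi> t) v) (\<lambda>t. cscale (\<phi> t) v) s t n - 0) < \<epsilon>"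
    proof (intro exI[of _ d] conjI allI impI)
      show "d > 0" by fact
      fix n s t
      assume H: "s 0 = a \<and> s n = b \<and>
        (\<forall>k<n. s k < s (Suc k) \<and> s (Suc k) - s k < d \<and> t k \<in> {s k..s (Suc k)})"
      have inc: "\<forall>k<n. s k < s (Suc k)" using H by blast
      have sa: "s k \<ge> a" if "k \<le> n" for k using mono_upto[OF inc, of 0 k] H that by simp
      have sb: "s k \<le> b" if "k \<le> n" for k using mono_upto[OF inc, of k n] H that by simp
      have IkBS: "{s k<..s (Suc k)} \<in> BS" if "k < n" for k using sa[of k] that ab by (intro IBS) auto
      define R where "R k = gg (t k) * Re (c {s k<..s (Suc k)})" for k
      have teq: "cinner (cscale (\<phi> (t k)) v) (\<mu> {s k<..s (Suc k)} (cscale (\<phi> (t k)) v)) = of_real (R k)"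
        if "k < n" for k
      proof -
        have "c {s k<..s (Suc k)} \<in> \<real>" using c1[OF IkBS[OF that]] by simp
        hence "c {s k<..s (Suc k)} = of_real (Re (c {s k<..s (Suc k)}))" by (metis Reals_cases Re_complex_of_real)
        thus ?thesis using term_eq[OF IkBS[OF that]] by (simp add: R_def)
      qed
      have Rle: "R k \<le> e' * Re (c {s k<..s (Suc k)})" if k: "k < n" for k
      proof (cases "{s k<..s (Suc k)} \<inter> N = {}")
        case True
        thus ?thesis using c5[OF IkBS[OF k] True] by (simp add: R_def)
      next
        case False
        then obtain l where l: "l \<in> N" "s k < l" "l \<le> s (Suc k)" by auto
        have tk: "t k \<in> {s k..s (Suc k)}" "s (Suc k) - s k < d" using H k by auto
        have inab: "t k \<in> {a..b}" "l \<in> {a..b}" using tk l sa[of k] sb[of "Suc k"] k by auto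
        have "dist (t k) l < d" using tk l by (auto simp: dist_real_def)
        hence "dist (gg (t k)) (gg l) < e'" using d(2) inab by blast
        moreover have "gg l = 0" using phiz l by (simp add: gg_def)
        ultimately have "gg (t k) \<le> e'" by (simp add: dist_real_def gg_def)
        thus ?thesis unfolding R_def using c1[OF IkBS[OF k]] by (intro mult_right_mono) auto
      qed
      have Rnn: "R k \<ge> 0" if "k < n" for k using c1[OF IkBS[OF that]] by (simp add: R_def gg_def)
      have "rs_sum \<mu> (\<lambda>t. cscale (\<phi> t) v) (\<lambda>t. cscale (\<phi> t) v) s t n = of_real (\<Sum>k<n. R k)"
        unfolding rs_sum_def by (simp add: teq)
      hence "cmod (rs_sum \<mu> (\<lambda>t. cscale (\<phi> t) v) (\<lambda>t. cscale (\<phi> t) v) s t n - 0) = (\<Sum>k<n. R k)"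
      proof -
        have "(\<Sum>k<n. R k) \<ge> 0" using Rnn by (intro sum_nonneg) auto
        moreover have "cmod (of_real (\<Sum>k<n. R k)) = \<bar>\<Sum>k<n. R k\<bar>" by (rule norm_of_real)
        ultimately show ?thesis using \<open>rs_sum _ _ _ _ _ _ = _\<close> by simp
      qed
      also have "\<dots> \<le> (\<Sum>k<n. e' * Re (c {s k<..s (Suc k)}))" by (intro sum_mono Rle) auto
      also have "\<dots> = e' * Re (\<Sum>k<n. c {s k<..s (Suc k)})" by (simp add: sum_distrib_left)
      also have "(\<Sum>k<n. c {s k<..s (Suc k)}) = c {a<..b}" using c6[OF inc] H ab by simp
      also have "e' * Re (c {a<..b}) = \<epsilon> * M / (M + 1)" using M0 by (simp add: e'_def M_def)
      also have "\<dots> < \<epsilon>" using M0 ep by (simp add: field_simps)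
      finally show "cmod (rs_sum \<mu> (\<lambda>t. cscale (\<phi> t) v) (\<lambda>t. cscale (\<phi> t) v) s t n - 0) < \<epsilon>" .
    qed
  qed
qed



lemma op_int_on_eq: "has_op_int_on \<mu> f g a b I \<Longrightarrow> a < b \<Longrightarrow> op_int_on \<mu> f g a b = I"
  unfolding op_int_on_def using has_op_int_on_unique by blast

lemma op_int_zero:
  assumes "\<And>a b. 0 < a \<Longrightarrow> a < b \<Longrightarrow> has_op_int_on \<mu> f g a b 0"
  shows "op_int \<mu> f g = 0"
proof -
  have ntl: "\<not> trivial_limit (at_right (0::real) \<times>\<^sub>F (at_top :: real filter))"
  proof -
    have "at_right (0::real) \<noteq> bot" using trivial_limit_at_right_real unfolding trivial_limit_def .
    moreover have "(at_top::real filter) \<noteq> bot" by simp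
    ultimately show ?thesis by (metis eventually_False prod_filter_eq_bot)
  qed
  have ev: "eventually (\<lambda>p. (case p of (a, b) \<Rightarrow> op_int_on \<mu> f g a b) = 0) (at_right (0::real) \<times>\<^sub>F at_top)"
    unfolding eventually_prod_filter
  proof (intro exI conjI allI impI)
    show "eventually (\<lambda>a::real. 0 < a \<and> a < 1) (at_right 0)"
      unfolding eventually_at_right_field by (intro exI[of _ 1]) auto
    show "eventually (\<lambda>b::real. b > 1) at_top" by (rule eventually_gt_at_top)
    fix a b :: real assume "0 < a \<and> a < 1" "b > 1"
    thus "(case (a, b) of (a, b) \<Rightarrow> op_int_on \<mu> f g a b) = 0"
      using op_int_on_eq[OF assms] by simp
  qed
  have H: "has_op_int \<mu> f g 0"
    unfolding has_op_int_def
  proof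
    show "\<forall>a b. 0 < a \<and> a < b \<longrightarrow> (\<exists>I. has_op_int_on \<mu> f g a b I)" using assms by blast
    show "((\<lambda>(a, b). op_int_on \<mu> f g a b) \<longlongrightarrow> 0) (at_right 0 \<times>\<^sub>F at_top)"
      using tendsto_eventually[OF ev] by (simp add: case_prod_unfold)
  qed
  show ?thesis unfolding op_int_def
  proof (rule the_equality)
    show "has_op_int \<mu> f g 0" by (rule H)
  next
    fix L assume "has_op_int \<mu> f g L"
    hence "((\<lambda>(a, b). op_int_on \<mu> f g a b) \<longlongrightarrow> L) (at_right 0 \<times>\<^sub>F at_top)" by (simp add: has_op_int_def)
    moreover have "((\<lambda>(a, b). op_int_on \<mu> f g a b) \<longlongrightarrow> 0) (at_right 0 \<times>\<^sub>F at_top)"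
      using H by (simp add: has_op_int_def)
    ultimately show "L = 0" using tendsto_unique[OF ntl] by blast
  qed
qed

lemma integrable_inv: "integrable lborel (\<lambda>x::real. inverse (1 + x^2))"
  using integrable_inverse_1_plus_square by (simp add: set_integrable_def einterval_def)

theorem propositionA3:
  fixes \<mu> :: "real set \<Rightarrow> 'k::{complex_inner, complete_space} \<Rightarrow> 'k"
    and N :: "real set"
  assumes "K_carleson \<mu>"
    and "countable N" and "N \<subseteq> {0<..}"
    and "(\<lambda>l. l / (l + 1)\<^sup>2) summable_on N"
    and "\<not> strictly_positive_op (\<mu> ({0<..} - N))"
  shows "\<not> H_mu_strictly_positive \<mu>"
proof
  assume Hs: "H_mu_strictly_positive \<mu>"
  have pos: "pos_op_measure \<mu>" using assms(1) by (simp add: K_carleson_def)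
  have Nb: "N \<in> sets borel"
    using null_setsD2[OF countable_imp_null_set_lborel[OF assms(2)]] by simp
  have "positive_op (\<mu> ({0<..} - N))" using pos Nb unfolding pos_op_measure_def by auto
  then obtain v where v: "v \<noteq> 0" "Re (cinner v (\<mu> ({0<..} - N) v)) \<le> 0"
    using assms(5) unfolding strictly_positive_op_def positive_op_def by force
  obtain B where B: "B holomorphic_on {z. Im z > 0}" "\<forall>z. Im z > 0 \<longrightarrow> norm (B z) \<le> 1"
      "\<forall>l\<in>N. B (Complex 0 l) = 0" "B (Complex 1 1) \<noteq> 0"
    using blaschke[OF assms(2,3,4)] by blast
  define H where "H = {z. Im z > 0}"
  have den: "z + \<i> \<noteq> 0" if "Im z > 0" for z
  proof
    assume "z + \<i> = 0" hence "Im (z + \<i>) = 0" by simp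
    thus False using that by simp
  qed
  define \<phi> where "\<phi> z = B z / (z + \<i>)" for z
  have phiholo: "\<phi> holomorphic_on H"
    unfolding \<phi>_def[abs_def] H_def using B(1) den by (auto intro!: holomorphic_intros)
  define f where "f z = cscale (\<phi> z) v" for z
  have normf: "norm (f z) = cmod (\<phi> z) * norm v" for z by (simp add: f_def norm_cscale)
  have fH: "f \<in> hardy2"
    unfolding hardy2_def
  proof (intro CollectI conjI allI impI)
    fix z :: complex assume z: "Im z > 0"
    obtain d where d: "(\<phi> has_field_derivative d) (at z)"
      using phiholo z holomorphic_on_open[of H \<phi>] open_halfspace_Im_gt[of 0] by (auto simp: H_def)
    have "((\<lambda>z. cscale (\<phi> z) v) has_derivative (\<lambda>h. cscale ((*) d h) v)) (at z)"
      by (rule bounded_linear.has_derivative[OF bounded_linear_cscale_left])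
         (use d in \<open>simp add: has_field_derivative_def\<close>)
    moreover have "(\<lambda>h. cscale ((*) d h) v) = (\<lambda>h. cscale h (cscale d v))"
      by (simp add: cscale_cscale mult.commute)
    ultimately show "\<exists>f'. (f has_derivative (\<lambda>h. cscale h f')) (at z)"
      by (auto simp: f_def[abs_def])
  next
    define K where "K = (\<integral>\<^sup>+ x. ennreal ((norm v)^2 * inverse (1 + x^2)) \<partial>lborel)"
    have Kfin: "K < \<infinity>"
    proof -
      have "integrable lborel (\<lambda>x::real. (norm v)^2 * inverse (1 + x^2))"
        using integrable_inv by (rule integrable_mult_right)
      hence bnd: "(\<integral>\<^sup>+ x. ennreal (norm ((norm v)^2 * inverse (1 + x^2))) \<partial>lborel) < \<infinity>"
        by (rule integrable_iff_bounded[THEN iffD1, THEN conjunct2])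
      have eqn: "\<And>x::real. norm ((norm v)^2 * inverse (1 + x^2)) = (norm v)^2 * inverse (1 + x^2)"
        by (simp add: abs_mult)
      show ?thesis using bnd by (simp only: eqn K_def)
    qed
    have "(SUP y\<in>{0<..}. \<integral>\<^sup>+ x. ennreal ((norm (f (Complex x y)))\<^sup>2) \<partial>lborel) \<le> K"
    proof (rule SUP_least)
      fix y :: real assume y: "y \<in> {0<..}"
      show "(\<integral>\<^sup>+ x. ennreal ((norm (f (Complex x y)))\<^sup>2) \<partial>lborel) \<le> K"
        unfolding K_def
      proof (rule nn_integral_mono)
        fix x :: real
        define z where "z = Complex x y"
        have iz: "Im z > 0" using y by (simp add: z_def)
        have dz: "(cmod (z + \<i>))^2 = x^2 + (y + 1)^2" by (simp add: z_def cmod_power2)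
        have "(y + 1)^2 \<ge> 1" using y by (intro one_le_power) auto
        hence dz1: "(cmod (z + \<i>))^2 \<ge> 1 + x^2" using dz by simp
        have "(cmod (\<phi> z))^2 = (cmod (B z))^2 / (cmod (z + \<i>))^2"
          by (simp add: \<phi>_def norm_divide power_divide)
        also have "\<dots> \<le> 1 / (cmod (z + \<i>))^2"
          using B(2) iz by (intro divide_right_mono) (auto simp: power_le_one)
        also have "\<dots> \<le> inverse (1 + x^2)"
          using dz1 by (simp add: inverse_eq_divide frac_le add_pos_nonneg)
        finally have "(cmod (\<phi> z))^2 \<le> inverse (1 + x^2)" .
        hence "(norm (f z))^2 \<le> (norm v)^2 * inverse (1 + x^2)"
          by (simp add: normf power_mult_distrib mult.commute mult_left_mono)
        thus "ennreal ((norm (f (Complex x y)))\<^sup>2) \<le> ennreal ((norm v)^2 * inverse (1 + x^2))"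
          by (simp add: z_def ennreal_leI)
      qed
    qed
    thus "(SUP y\<in>{0<..}. \<integral>\<^sup>+ x. ennreal ((norm (f (Complex x y)))\<^sup>2) \<partial>lborel) < \<infinity>"
      using Kfin by (rule le_less_trans)
  qed
  have fnz: "Im (Complex 1 1) > 0 \<and> f (Complex 1 1) \<noteq> 0"
  proof -
    have "\<phi> (Complex 1 1) \<noteq> 0" using B(4) den[of "Complex 1 1"] by (simp add: \<phi>_def)
    hence "norm (f (Complex 1 1)) > 0" using v(1) by (simp add: normf)
    thus ?thesis by auto
  qed
  define \<psi> where "\<psi> t = \<phi> (Complex 0 t)" for t
  have oi: "on_iaxis f = (\<lambda>t. cscale (\<psi> t) v)" by (simp add: on_iaxis_def f_def \<psi>_def fun_eq_iff)
  have psic: "continuous_on {0<..} \<psi>"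
  proof -
    have ci: "Complex 0 t = \<i> * complex_of_real t" for t by (simp add: complex_eq_iff)
    have e: "\<psi> = (\<lambda>t. \<phi> (\<i> * complex_of_real t))"
      by (simp add: \<psi>_def fun_eq_iff ci)
    show ?thesis unfolding e
      by (rule continuous_on_compose2[OF holomorphic_on_imp_continuous_on[OF phiholo]])
         (auto intro!: continuous_intros simp: H_def)
  qed
  have psiz: "\<forall>l\<in>N. \<psi> l = 0" using B(3) by (simp add: \<psi>_def \<phi>_def)
  have "carleson_form \<mu> f f = 0"
    unfolding carleson_form_def oi
    by (rule op_int_zero, rule int_zero[OF pos assms(2,3) v(2) psic psiz]) auto
  thus False using Hs fH fnz unfolding H_mu_strictly_positive_def by fastforce
qed

end
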